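(* Let $\mathcal{A}$ be a monotone allocation rule for a combinatorial auction problem, let $\mathbf{t}$ be the true type profile, and let $(A_1,\dots,A_n)$ be a feasible allocation maximizing $\sum_i t_i(A_i)$. Let $D=(\mathbf{d}^1,\dots,\mathbf{d}^T)$ be a sequence of profiles of single-minded declarations submitted to the mechanism $\mathcal{M}_{\mathcal{A}}$. If agent $i$ minimizes external regret in $D$, then $$\frac1T\sum_{t=1}^T\Big(t_i(\mathcal{A}_i(\mathbf{d}^t))+\theta_i^{\mathcal{A}}(A_i,\mathbf{d}^t_{-i})\Big)\ \ge\ t_i(A_i)-o(1),$$ where $o(1)\to 0$ as $T\to\infty$.
   Context: There is a set $M$ of $m$ items and $n$ agents; the problem specifies which allocation profiles $(X_1,\dots,X_n)$ are feasible. Agent $i$ has a private monotone valuation $t_i:2^M\to\mathbb{R}_{\ge0}$ with $t_i(\emptyset)=0$. A single-minded declaration $(S,x)$ assigns value $x$ to supersets of $S$ and $0$ otherwise. An allocation rule $\mathcal{A}$ maps declaration profiles to feasible allocations, $\mathcal{A}_i(\mathbf{d})$ being agent $i$'s set. Monotone: if agent $i$ wins $S$ by declaring value $v$ for it, he also wins any subset of $S$ declared at any value at least $v$. Critical price: $\theta_i^{\mathcal{A}}(S,\mathbf{d}_{-i})=\inf\{v:\exists d_i,\ d_i(S)=v,\ \mathcal{A}_i(d_i,\mathbf{d}_{-i})=S\}$. Mechanism $\mathcal{M}_{\mathcal{A}}$: replace each declaration $d_i$ by $(S_i,d_i(S_i))$ with $S_i\in\arg\max_S d_i(S)$ (ties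 to smaller sets), run $\mathcal{A}$, and charge each winner the critical price of his set (losers pay $0$). Utility $u_i(\mathbf{d})$ = true value of received set minus payment. Agent $i$ minimizes external regret in $D$ if for every fixed declaration $d$, $\sum_t u_i(d_i^t,\mathbf{d}_{-i}^t)\ge \sum_t u_i(d,\mathbf{d}^t_{-i})-o(T)$. *)

theory Defs
  imports "HOL-Analysis.Analysis"
begin

text \<open>Items form the finite type 'i (so M = UNIV), agents the finite type 'a.
  A single-minded declaration is a pair (S, x); as a valuation it is smv S x.\<close>

definition smv :: "'i set \<Rightarrow> real \<Rightarrow> 'i set \<Rightarrow> real" where
  "smv S x = (\<lambda>T. if S \<subseteq> T then x else 0)"

definition valuation :: "('i set \<Rightarrow> real) \<Rightarrow> bool" where
  "valuation v \<longleftrightarrow> v {} = 0 \<and> (\<forall>S T. S \<subseteq> T \<longrightarrow> v S \<le> v T) \<and> (\<forall>S. 0 \<le> v S)"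

definition nonneg_profile :: "('a \<Rightarrow> 'i set \<times> real) \<Rightarrow> bool" where
  "nonneg_profile b \<longleftrightarrow> (\<forall>j. 0 \<le> snd (b j))"

definition monotone_rule :: "(('a \<Rightarrow> 'i set \<times> real) \<Rightarrow> 'a \<Rightarrow> 'i set) \<Rightarrow> bool" where
  "monotone_rule A \<longleftrightarrow>
     (\<forall>b i T y. nonneg_profile b \<longrightarrow> T \<subseteq> A b i \<longrightarrow>
        smv (fst (b i)) (snd (b i)) (A b i) \<le> y \<longrightarrow> A (b(i := (T, y))) i = T)"

text \<open>Critical price (in ereal, so that the infimum of the empty set is +\<infinity>).\<close>
definition crit :: "(('a \<Rightarrow> 'i set \<times> real) \<Rightarrow> 'a \<Rightarrow> 'i set) \<Rightarrow> 'a \<Rightarrow> 'i set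
                      \<Rightarrow> ('a \<Rightarrow> 'i set \<times> real) \<Rightarrow> ereal" where
  "crit A i S b = Inf {ereal (smv S' x S) | S' x. 0 \<le> x \<and> A (b(i := (S', x))) i = S}"

definition tie_rule :: "(('i::finite set \<Rightarrow> real) \<Rightarrow> 'i set) \<Rightarrow> bool" where
  "tie_rule sel \<longleftrightarrow> (\<forall>d. (\<forall>T. d T \<le> d (sel d)) \<and>
                        (\<forall>T. d T = d (sel d) \<longrightarrow> card (sel d) \<le> card T))"

definition reduce :: "(('i set \<Rightarrow> real) \<Rightarrow> 'i set) \<Rightarrow> ('a \<Rightarrow> 'i set \<Rightarrow> real)
                        \<Rightarrow> 'a \<Rightarrow> 'i set \<times> real" where
  "reduce sel d = (\<lambda>j. (sel (d j), d j (sel (d j))))"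

definition payment :: "(('a \<Rightarrow> 'i set \<times> real) \<Rightarrow> 'a \<Rightarrow> 'i set) \<Rightarrow> 'a
                         \<Rightarrow> ('a \<Rightarrow> 'i set \<times> real) \<Rightarrow> real" where
  "payment A i b = (if A b i = {} then 0 else real_of_ereal (crit A i (A b i) b))"

definition utility :: "(('a \<Rightarrow> 'i set \<times> real) \<Rightarrow> 'a \<Rightarrow> 'i set) \<Rightarrow> (('i set \<Rightarrow> real) \<Rightarrow> 'i set)
                        \<Rightarrow> ('a \<Rightarrow> 'i set \<Rightarrow> real) \<Rightarrow> 'a \<Rightarrow> ('a \<Rightarrow> 'i set \<Rightarrow> real) \<Rightarrow> real" where
  "utility A sel tv i d = (let b = reduce sel d in tv i (A b i) - payment A i b)"

end

theory Submission imports Defs begin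

lemma crit_upd: "crit A i S (b(i:=z)) = crit A i S b" by (simp add: crit_def)

lemma crit_nonneg: "0 \<le> crit A i S b"
  unfolding crit_def by (rule Inf_greatest) (auto simp: smv_def)

lemma crit_le_own: "0 \<le> snd (b i) \<Longrightarrow> crit A i (A b i) b \<le> ereal (smv (fst (b i)) (snd (b i)) (A b i))"
proof -
  assume h: "0 \<le> snd (b i)"
  have e: "b(i := (fst (b i), snd (b i))) = b" by simp
  show ?thesis unfolding crit_def
    by (rule Inf_lower) (use h e in force)
qed

lemma payment_le:
  assumes "0 \<le> snd (b i)" "0 \<le> t (A b i)"
    and "smv (fst (b i)) (snd (b i)) (A b i) \<le> t (A b i)"
  shows "0 \<le> payment A i b \<and> payment A i b \<le> t (A b i)"
proof -
  have c0: "0 \<le> crit A i (A b i) b" by (rule crit_nonneg)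
  have c1: "crit A i (A b i) b \<le> ereal (t (A b i))"
    using crit_le_own[of b i A, OF assms(1)] assms(3) by (meson ereal_less_eq(3) order_trans)
  obtain r where r: "crit A i (A b i) b = ereal r" using c0 c1
    by (cases "crit A i (A b i) b") auto
  show ?thesis using c0 c1 r assms(2) by (auto simp: payment_def)
qed

lemma sel_single:
  assumes ties: "tie_rule sel" and v: "0 < v"
  shows "sel (smv (S::'i::finite set) v) = S"
proof -
  let ?d = "smv S v"
  have le: "?d S \<le> ?d (sel ?d)" using ties by (simp add: tie_rule_def)
  hence sub: "S \<subseteq> sel ?d" using v by (auto simp: smv_def split: if_splits)
  hence "?d (sel ?d) = ?d S" by (simp add: smv_def)
  hence "card (sel ?d) \<le> card S" using ties unfolding tie_rule_def by metis
  thus ?thesis using sub by (metis card_seteq finite)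
qed

lemma dev_bound:
  fixes b :: "'a \<Rightarrow> 'i::finite set \<times> real"
  assumes mono: "monotone_rule A" and nn: "nonneg_profile b" and val: "valuation t"
    and ties: "tie_rule sel"
    and b'_def: "b' = b(i := (sel (smv S (t S)), smv S (t S) (sel (smv S (t S)))))"
  shows "ereal (t S) \<le> ereal (t (A b' i) - payment A i b') + crit A i S b"
proof -
  let ?v = "t S"
  let ?dd = "smv S ?v"
  have t0: "\<And>W. 0 \<le> t W" and tm: "\<And>X Y. X \<subseteq> Y \<Longrightarrow> t X \<le> t Y" and te: "t {} = 0"
    using val by (auto simp: valuation_def)
  have own0: "0 \<le> snd (b' i)" using t0 b'_def by (simp add: smv_def)
  have ownle: "smv (fst (b' i)) (snd (b' i)) (A b' i) \<le> t (A b' i)"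
    using b'_def t0 tm by (auto simp: smv_def)
  from payment_le[of b' i t A, OF own0 t0[of "A b' i"] ownle]
  have pay: "0 \<le> payment A i b'" "payment A i b' \<le> t (A b' i)" by auto
  have th0: "0 \<le> crit A i S b" by (rule crit_nonneg)
  show ?thesis
  proof (cases "crit A i S b < ereal ?v")
    case False
    have "ereal ?v \<le> crit A i S b" using False by simp
    also have "\<dots> \<le> ereal (t (A b' i) - payment A i b') + crit A i S b"
    proof -
      have "0 \<le> ereal (t (A b' i) - payment A i b')" using pay by simp
      thus ?thesis by (rule add_increasing) simp
    qed
    finally show ?thesis .
  next
    case True
    have vpos: "0 < ?v" proof -
      have "0 < ereal ?v" by (rule le_less_trans[OF th0 True])
      thus ?thesis by simp
    qed
    have Sne: "S \<noteq> {}" using vpos te by auto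
    have selS: "sel ?dd = S" by (rule sel_single[OF ties vpos])
    have b'2: "b' = b(i := (S, ?v))" using b'_def selS by (simp add: smv_def)
    from True obtain e where e: "e \<in> {ereal (smv S' x S) | S' x. 0 \<le> x \<and> A (b(i := (S', x))) i = S}"
      and elt: "e < ereal ?v"
      unfolding crit_def by (auto simp: Inf_less_iff)
    then obtain S' x where x0: "0 \<le> x" and win: "A (b(i := (S', x))) i = S"
      and lt: "smv S' x S < ?v" by auto
    let ?b2 = "b(i := (S', x))"
    have nn2: "nonneg_profile ?b2" using nn x0 by (simp add: nonneg_profile_def)
    have "A (?b2(i := (S, ?v))) i = S"
    proof -
      have "S \<subseteq> A ?b2 i" using win by simp
      moreover have "smv (fst (?b2 i)) (snd (?b2 i)) (A ?b2 i) \<le> ?v" using win lt by simp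
      ultimately show ?thesis using mono nn2 unfolding monotone_rule_def by blast
    qed
    hence winS: "A b' i = S" using b'2 by simp
    have cfin: "crit A i S b' = crit A i S b" using b'2 by (simp add: crit_upd)
    obtain r where r: "crit A i S b = ereal r" using th0 True
      by (cases "crit A i S b") auto
    have "payment A i b' = r" using winS Sne cfin r by (simp add: payment_def)
    thus ?thesis using winS r by simp
  qed
qed

lemma payment_nonneg: "0 \<le> payment A i b"
proof -
  have "0 \<le> crit A i (A b i) b" by (rule crit_nonneg)
  thus ?thesis unfolding payment_def
    by (cases "crit A i (A b i) b") auto
qed

theorem lemma3p2:
  fixes feasible :: "('a::finite \<Rightarrow> 'i::finite set) \<Rightarrow> bool"
    and A :: "('a \<Rightarrow> 'i set \<times> real) \<Rightarrow> 'a \<Rightarrow> 'i set"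
    and sel :: "('i set \<Rightarrow> real) \<Rightarrow> 'i set"
    and tv :: "'a \<Rightarrow> 'i set \<Rightarrow> real"
    and Aopt :: "'a \<Rightarrow> 'i set"
    and D :: "nat \<Rightarrow> 'a \<Rightarrow> 'i set \<Rightarrow> real"
    and i :: 'a
  assumes rule_feasible: "\<forall>b. nonneg_profile b \<longrightarrow> feasible (A b)"
    and mono: "monotone_rule A"
    and types: "\<forall>j. valuation (tv j)"
    and opt_feasible: "feasible Aopt"
    and opt_max: "\<forall>X. feasible X \<longrightarrow> (\<Sum>j\<in>UNIV. tv j (X j)) \<le> (\<Sum>j\<in>UNIV. tv j (Aopt j))"
    and single_minded: "\<forall>\<tau> j. \<exists>S x. 0 \<le> x \<and> D \<tau> j = smv S x"
    and ties: "tie_rule sel"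
    and regret: "\<forall>d. valuation d \<longrightarrow>
       (\<exists>r :: nat \<Rightarrow> real. ((\<lambda>T. r T / real T) \<longlonglongrightarrow> 0) \<and>
          (\<forall>T. (\<Sum>\<tau><T. utility A sel tv i (D \<tau>))
                 \<ge> (\<Sum>\<tau><T. utility A sel tv i ((D \<tau>)(i := d))) - r T))"
  shows "\<exists>f :: nat \<Rightarrow> real. (f \<longlonglongrightarrow> 0) \<and>
     (\<forall>T>0. ereal (1 / real T) *
        (\<Sum>\<tau><T. ereal (tv i (A (reduce sel (D \<tau>)) i)) + crit A i (Aopt i) (reduce sel (D \<tau>)))
        \<ge> ereal (tv i (Aopt i) - f T))"
proof -
  define t where "t = tv i"
  define S where "S = Aopt i"
  define d where "d = smv S (t S)"
  have val: "valuation t" using types by (simp add: t_def)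
  have t0: "\<And>W. 0 \<le> t W" and tm: "\<And>X Y. X \<subseteq> Y \<Longrightarrow> t X \<le> t Y" and te: "t {} = 0"
    using val by (auto simp: valuation_def)
  have vd: "valuation d"
    unfolding valuation_def d_def smv_def using t0 te by auto
  from regret vd obtain r where rlim: "(\<lambda>T. r T / real T) \<longlonglongrightarrow> 0"
    and rb: "\<And>T. (\<Sum>\<tau><T. utility A sel tv i (D \<tau>))
                 \<ge> (\<Sum>\<tau><T. utility A sel tv i ((D \<tau>)(i := d))) - r T" by blast
  define b where "b = (\<lambda>\<tau>. reduce sel (D \<tau>))"
  define b' where "b' = (\<lambda>\<tau>. (b \<tau>)(i := (sel d, d (sel d))))"
  define u where "u = (\<lambda>\<tau>. utility A sel tv i (D \<tau>))"
  define u' where "u' = (\<lambda>\<tau>. utility A sel tv i ((D \<tau>)(i := d)))"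
  define th where "th = (\<lambda>\<tau>. crit A i S (b \<tau>))"
  have nn: "nonneg_profile (b \<tau>)" for \<tau>
  proof -
    have "0 \<le> D \<tau> j W" for j W using single_minded by (metis order_refl smv_def)
    thus ?thesis by (simp add: nonneg_profile_def b_def reduce_def)
  qed
  have red: "reduce sel ((D \<tau>)(i := d)) = b' \<tau>" for \<tau>
    by (auto simp: reduce_def b'_def b_def fun_eq_iff)
  have u'eq: "u' \<tau> = t (A (b' \<tau>) i) - payment A i (b' \<tau>)" for \<tau>
    by (simp add: u'_def utility_def red t_def Let_def)
  have dev: "ereal (t S) \<le> ereal (u' \<tau>) + th \<tau>" for \<tau>
    unfolding u'eq th_def
    by (rule dev_bound[OF mono nn val ties]) (simp add: b'_def d_def)
  have ule: "u \<tau> \<le> t (A (b \<tau>) i)" for \<tau>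
    using payment_nonneg[of A i "b \<tau>"] by (simp add: u_def utility_def b_def t_def Let_def)
  have th0: "0 \<le> th \<tau>" for \<tau> unfolding th_def by (rule crit_nonneg)
  show ?thesis
  proof (intro exI conjI allI impI)
    show "(\<lambda>T. r T / real T) \<longlonglongrightarrow> 0" by (rule rlim)
    fix T :: nat assume T0: "0 < T"
    define Th where "Th = (\<Sum>\<tau><T. th \<tau>)"
    have s1: "ereal (\<Sum>\<tau><T. u \<tau>) + Th \<le> (\<Sum>\<tau><T. ereal (t (A (b \<tau>) i)) + th \<tau>)"
    proof -
      have "ereal (\<Sum>\<tau><T. u \<tau>) + Th = (\<Sum>\<tau><T. ereal (u \<tau>) + th \<tau>)"
        by (simp add: Th_def sum.distrib)
      also have "\<dots> \<le> (\<Sum>\<tau><T. ereal (t (A (b \<tau>) i)) + th \<tau>)"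
        by (rule sum_mono) (use ule in \<open>simp add: add_right_mono\<close>)
      finally show ?thesis .
    qed
    have s2: "ereal (real T * t S) \<le> ereal (\<Sum>\<tau><T. u' \<tau>) + Th"
    proof -
      have "ereal (real T * t S) = (\<Sum>\<tau><T. ereal (t S))" by simp
      also have "\<dots> \<le> (\<Sum>\<tau><T. ereal (u' \<tau>) + th \<tau>)" by (rule sum_mono) (rule dev)
      also have "\<dots> = ereal (\<Sum>\<tau><T. u' \<tau>) + Th" by (simp add: Th_def sum.distrib)
      finally show ?thesis .
    qed
    have Th0: "0 \<le> Th" unfolding Th_def by (rule sum_nonneg) (rule th0)
    have s3: "ereal (real T * t S - r T) \<le> ereal (\<Sum>\<tau><T. u \<tau>) + Th"
    proof (cases Th)
      case (real x)
      have "(\<Sum>\<tau><T. u' \<tau>) - r T \<le> (\<Sum>\<tau><T. u \<tau>)" using rb[of T] by (simp add: u_def u'_def)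
      moreover have "real T * t S \<le> (\<Sum>\<tau><T. u' \<tau>) + x" using s2 real by simp
      ultimately show ?thesis using real by simp
    next
      case PInf thus ?thesis by simp
    next
      case MInf thus ?thesis using Th0 by simp
    qed
    have main: "ereal (real T * t S - r T) \<le> (\<Sum>\<tau><T. ereal (t (A (b \<tau>) i)) + th \<tau>)"
      using s1 s3 by (rule order_trans[rotated])
    have "ereal (1 / real T) * ereal (real T * t S - r T)
          \<le> ereal (1 / real T) * (\<Sum>\<tau><T. ereal (t (A (b \<tau>) i)) + th \<tau>)"
      by (rule ereal_mult_left_mono[OF main]) simp
    moreover have "ereal (1 / real T) * ereal (real T * t S - r T) = ereal (t S - r T / real T)"
      using T0 by (simp add: field_simps)
    ultimately show "ereal (tv i (Aopt i) - r T / real T) \<le> ereal (1 / real T) *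
        (\<Sum>\<tau><T. ereal (tv i (A (reduce sel (D \<tau>)) i)) + crit A i (Aopt i) (reduce sel (D \<tau>)))"
      by (simp add: t_def S_def b_def th_def)
  qed
qed

end
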